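(* Let $\tau>1$ and consider two candidates $P,Q$. Weighted Majority Rule 2 (defined in the context) has distortion at most $\max\big\{\frac{3\tau-1}{\tau+1},\frac{\tau+2}{\tau}\big\}$; i.e., if it selects $P$ then $SC(P)\le \max\{\frac{3\tau-1}{\tau+1},\frac{\tau+2}{\tau}\}\,SC(Q)$.
   Context: Voters $N=\{1,\dots,n\}$ and candidates are points of an arbitrary metric space $(X,d)$. Voter $i$ prefers $P$ to $Q$ only if $d(i,P)\le d(i,Q)$, with preference strength $\alpha_i^{PQ}=d(i,Q)/d(i,P)\ge1$. $SC(Y)=\sum_{i\in N}d(i,Y)$. For two candidates and threshold $\tau$, the information available is every voter's preferred candidate and whether its preference strength is $>\tau$ (strong) or $\le\tau$ (weak). Let $A_2,A_1$ be the voters preferring $P$ with strong, resp. weak, preference, and $B_2,B_1$ likewise for $Q$. Weighted Majority Rule 2: give weight $\frac{\tau+1}{\tau-1}$ to each strong voter and weight $1$ to each weak voter, and select $P$ if $\frac{\tau+1}{\tau-1}|A_2|+|A_1|\ge|B_1|+\frac{\tau+1}{\tau-1}|B_2|$, otherwise $Q$. *)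

theory Defs
  imports "HOL-Analysis.Analysis"
begin

text \<open>Voters are indexed by {1..n}; voter i is located at point vloc i of a metric space.
  prefP i = True means voter i prefers P (i.e. is counted on P's side), False means Q.\<close>

definition SC :: "(nat \<Rightarrow> 'a::metric_space) \<Rightarrow> nat \<Rightarrow> 'a \<Rightarrow> real" where
  "SC vloc n Y = (\<Sum>i\<in>{1..n}. dist (vloc i) Y)"

definition consistent_prefs :: "(nat \<Rightarrow> 'a::metric_space) \<Rightarrow> nat \<Rightarrow> (nat \<Rightarrow> bool) \<Rightarrow> 'a \<Rightarrow> 'a \<Rightarrow> bool" where
  "consistent_prefs vloc n prefP P Q \<longleftrightarrow>
     (\<forall>i\<in>{1..n}. (prefP i \<longrightarrow> dist (vloc i) P \<le> dist (vloc i) Q) \<and>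
                  (\<not> prefP i \<longrightarrow> dist (vloc i) Q \<le> dist (vloc i) P))"

text \<open>Preference strength d(v,Y)/d(v,X) of a voter at v preferring X over Y exceeds tau;
  written multiplicatively so that d(v,X)=0<d(v,Y) counts as infinite strength.\<close>
definition strong_pref :: "real \<Rightarrow> 'a::metric_space \<Rightarrow> 'a \<Rightarrow> 'a \<Rightarrow> bool" where
  "strong_pref \<tau> v X Y \<longleftrightarrow> dist v Y > \<tau> * dist v X"

definition A2 where "A2 \<tau> vloc n prefP P Q = {i\<in>{1..n}. prefP i \<and> strong_pref \<tau> (vloc i) P Q}"
definition A1 where "A1 \<tau> vloc n prefP P Q = {i\<in>{1..n}. prefP i \<and> \<not> strong_pref \<tau> (vloc i) P Q}"
definition B2 where "B2 \<tau> vloc n prefP P Q = {i\<in>{1..n}. \<not> prefP i \<and> strong_pref \<tau> (vloc i) Q P}"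
definition B1 where "B1 \<tau> vloc n prefP P Q = {i\<in>{1..n}. \<not> prefP i \<and> \<not> strong_pref \<tau> (vloc i) Q P}"

definition WMR2_selects_P :: "real \<Rightarrow> (nat \<Rightarrow> 'a::metric_space) \<Rightarrow> nat \<Rightarrow> (nat \<Rightarrow> bool) \<Rightarrow> 'a \<Rightarrow> 'a \<Rightarrow> bool" where
  "WMR2_selects_P \<tau> vloc n prefP P Q \<longleftrightarrow>
     (\<tau>+1)/(\<tau>-1) * real (card (A2 \<tau> vloc n prefP P Q)) + real (card (A1 \<tau> vloc n prefP P Q))
       \<ge> real (card (B1 \<tau> vloc n prefP P Q)) + (\<tau>+1)/(\<tau>-1) * real (card (B2 \<tau> vloc n prefP P Q))"

end

theory Submission
  imports Defs
begin

lemma cnt: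
  fixes S :: "nat set"
  shows "(\<Sum>i\<in>{1..n}. (if i \<in> S then (1::real) else 0)) = real (card ({1..n} \<inter> S))"
  by (simp add: sum.If_cases)

lemma vA2:
  fixes x y D c t :: real
  assumes "t > 1" "y > t*x" "D \<le> x + y" "c*t \<ge> t+2" "x \<ge> 0" "y \<ge> 0"
  shows "x - c*y \<le> -D"
proof -
  have "t*(c*y) \<ge> (t+2)*y" using assms(4,6) by (metis mult.assoc mult.commute mult_right_mono)
  hence "t*(x - c*y) \<le> t*x - (t+2)*y" by (simp add: algebra_simps)
  also have "\<dots> \<le> t*(-D)"
  proof -
    have "t*D \<le> t*(x+y)" using assms by (intro mult_left_mono) auto
    thus ?thesis using assms(2) by (simp add: algebra_simps)
  qed
  finally have "t*(x - c*y) \<le> t*(-D)" .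
  thus ?thesis using assms(1) mult_le_cancel_left_pos[of t "x - c*y" "-D"] by simp
qed

lemma vA1:
  fixes x y D c t :: real
  assumes "t > 1" "x \<le> y" "D \<le> x + y" "c*(t+1) \<ge> 3*t-1" "x \<ge> 0" "y \<ge> 0"
  shows "(t+1)*(x - c*y) \<le> -(t-1)*D"
proof -
  have "(t+1)*(c*y) \<ge> (3*t-1)*y" using assms(4,6) by (metis mult.assoc mult.commute mult_right_mono)
  hence "(t+1)*(x - c*y) \<le> (t+1)*x - (3*t-1)*y" by (simp add: algebra_simps)
  also have "\<dots> \<le> -(t-1)*D"
  proof -
    have "(t-1)*D \<le> (t-1)*(x+y)" using assms by (intro mult_left_mono) auto
    moreover have "2*t*x \<le> 2*t*y" using assms by auto
    ultimately show ?thesis by (simp add: algebra_simps)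
  qed
  finally show ?thesis .
qed

lemma vB1:
  fixes x y D c t :: real
  assumes "t > 1" "x \<le> t*y" "x \<le> y + D" "c*(t+1) \<ge> 3*t-1" "x \<ge> 0" "y \<ge> 0"
  shows "(t+1)*(x - c*y) \<le> (t-1)*D"
proof -
  have "(t+1)*(c*y) \<ge> (3*t-1)*y" using assms(4,6) by (metis mult.assoc mult.commute mult_right_mono)
  hence "(t+1)*(x - c*y) \<le> (t+1)*x - (3*t-1)*y" by (simp add: algebra_simps)
  also have "\<dots> \<le> (t-1)*D"
  proof -
    have "(t-1)*x \<le> (t-1)*(y+D)" using assms by (intro mult_left_mono) auto
    then show ?thesis using assms(2) by (simp add: algebra_simps)
  qed
  finally show ?thesis .
qed

lemma vB2:
  fixes x y D c :: real
  assumes "x \<le> y + D" "c \<ge> 1" "y \<ge> 0"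
  shows "x - c*y \<le> D"
proof -
  have "c*y \<ge> y" using assms by (metis mult_left_mono mult_1 mult.commute)
  thus ?thesis using assms by linarith
qed

lemma lwid:
  fixes l w D a1 a2 b1 b2 :: real
  assumes "l*w = 1"
  shows "-D * a2 - l*D * a1 + l*D * b1 + D * b2 = l*D*(b1 + w * b2 - (w * a2 + a1))"
proof -
  have "l*D*(b1 + w * b2 - (w * a2 + a1)) = l*D*b1 + (l*w)*D*b2 - (l*w)*D*a2 - l*D*a1"
    by (simp add: algebra_simps)
  thus ?thesis using assms by simp
qed

theorem mainTheorem4:
  fixes vloc :: "nat \<Rightarrow> 'a::metric_space" and n :: nat and prefP :: "nat \<Rightarrow> bool"
    and P Q :: 'a and \<tau> :: real
  assumes "\<tau> > 1"
    and "consistent_prefs vloc n prefP P Q"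
    and "WMR2_selects_P \<tau> vloc n prefP P Q"
  shows "SC vloc n P \<le> max ((3*\<tau>-1)/(\<tau>+1)) ((\<tau>+2)/\<tau>) * SC vloc n Q"
proof -
  define c where "c = max ((3*\<tau>-1)/(\<tau>+1)) ((\<tau>+2)/\<tau>)"
  define D where "D = dist P Q"
  define l where "l = (\<tau>-1)/(\<tau>+1)"
  define a2 where "a2 = A2 \<tau> vloc n prefP P Q"
  define a1 where "a1 = A1 \<tau> vloc n prefP P Q"
  define b2 where "b2 = B2 \<tau> vloc n prefP P Q"
  define b1 where "b1 = B1 \<tau> vloc n prefP P Q"
  have t: "\<tau> > 1" by fact
  have c1: "c*(\<tau>+1) \<ge> 3*\<tau>-1"
  proof -
    have "c \<ge> (3*\<tau>-1)/(\<tau>+1)" unfolding c_def by simp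
    thus ?thesis using t by (simp add: field_simps)
  qed
  have c2: "c*\<tau> \<ge> \<tau>+2"
  proof -
    have "c \<ge> (\<tau>+2)/\<tau>" unfolding c_def by simp
    thus ?thesis using t by (simp add: field_simps)
  qed
  have cge1: "c \<ge> 1"
  proof (rule ccontr)
    assume "\<not> c \<ge> 1"
    hence "c*\<tau> < 1*\<tau>" using t by (intro mult_strict_right_mono) auto
    thus False using c2 by simp
  qed
  have D0: "D \<ge> 0" unfolding D_def by simp
  define g where "g i = (if i \<in> a2 then -D else if i \<in> a1 then -l*D else if i \<in> b1 then l*D else if i \<in> b2 then D else 0)" for i
  have pw: "dist (vloc i) P - c * dist (vloc i) Q \<le> g i" if i: "i \<in> {1..n}" for i
  proof -
    define x where "x = dist (vloc i) P"
    define y where "y = dist (vloc i) Q"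
    have x0: "x \<ge> 0" and y0: "y \<ge> 0" unfolding x_def y_def by auto
    have tri1: "D \<le> x + y" unfolding x_def y_def D_def by (rule dist_triangle3)
    have tri2: "x \<le> y + D" unfolding x_def y_def D_def by (rule dist_triangle2)
    have cons: "(prefP i \<longrightarrow> x \<le> y) \<and> (\<not> prefP i \<longrightarrow> y \<le> x)"
      using assms(2) i unfolding consistent_prefs_def x_def y_def by auto
    have tp: "\<tau> + 1 > 0" using t by simp
    show ?thesis
    proof (cases "i \<in> a2")
      case True
      hence "y > \<tau>*x" unfolding a2_def A2_def strong_pref_def x_def y_def by auto
      thus ?thesis using vA2[OF t _ tri1 c2 x0 y0] True unfolding g_def x_def y_def by simp
    next
      case n2: False
      show ?thesis
      proof (cases "i \<in> a1")
        case True
        hence "x \<le> y" using cons unfolding a1_def A1_def by auto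
        hence "(\<tau>+1)*(x - c*y) \<le> -(\<tau>-1)*D" using vA1[OF t _ tri1 c1 x0 y0] by simp
        hence "x - c*y \<le> -l*D" unfolding l_def using tp by (simp add: field_simps)
        thus ?thesis using True n2 unfolding g_def x_def y_def by simp
      next
        case n1: False
        show ?thesis
        proof (cases "prefP i")
          case True
          thus ?thesis using n1 n2 i unfolding a1_def A1_def a2_def A2_def by auto
        next
          case np: False
          show ?thesis
          proof (cases "strong_pref \<tau> (vloc i) Q P")
            case True
            hence ib: "i \<in> b2" "i \<notin> b1" using np i unfolding b2_def B2_def b1_def B1_def by auto
            have "x - c*y \<le> D" using vB2[OF tri2 cge1 y0] .
            thus ?thesis using ib n1 n2 unfolding g_def x_def y_def by simp
          next
            case False
            hence ib: "i \<in> b1" using np i unfolding b1_def B1_def by auto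
            have "x \<le> \<tau>*y" using False unfolding strong_pref_def x_def y_def by simp
            hence "(\<tau>+1)*(x - c*y) \<le> (\<tau>-1)*D" using vB1[OF t _ tri2 c1 x0 y0] by simp
            hence "x - c*y \<le> l*D" unfolding l_def using tp by (simp add: field_simps)
            thus ?thesis using ib n1 n2 unfolding g_def x_def y_def by simp
          qed
        qed
      qed
    qed
  qed
  have disj: "a2 \<inter> a1 = {}" "a2 \<inter> b1 = {}" "a2 \<inter> b2 = {}" "a1 \<inter> b1 = {}" "a1 \<inter> b2 = {}" "b1 \<inter> b2 = {}"
    unfolding a1_def a2_def b1_def b2_def A1_def A2_def B1_def B2_def by auto
  have sub: "a2 \<subseteq> {1..n}" "a1 \<subseteq> {1..n}" "b1 \<subseteq> {1..n}" "b2 \<subseteq> {1..n}"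
    unfolding a1_def a2_def b1_def b2_def A1_def A2_def B1_def B2_def by auto
  have geq: "g i = -D * (if i \<in> a2 then 1 else 0) - l*D * (if i \<in> a1 then 1 else 0)
      + l*D * (if i \<in> b1 then 1 else 0) + D * (if i \<in> b2 then 1 else 0)" for i
    using disj unfolding g_def by (auto simp: disjoint_iff)
  have "(\<Sum>i\<in>{1..n}. g i) = -D * real (card ({1..n} \<inter> a2)) - l*D * real (card ({1..n} \<inter> a1))
      + l*D * real (card ({1..n} \<inter> b1)) + D * real (card ({1..n} \<inter> b2))"
    unfolding geq by (simp only: sum.distrib sum_subtractf sum_distrib_left[symmetric] cnt)
  also have "\<dots> = -D * real (card a2) - l*D * real (card a1) + l*D * real (card b1) + D * real (card b2)"
    using sub by (simp add: Int_absorb1)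
  also have "\<dots> = l*D*(real (card b1) + (\<tau>+1)/(\<tau>-1) * real (card b2) - ((\<tau>+1)/(\<tau>-1) * real (card a2) + real (card a1)))"
    using t unfolding l_def by (intro lwid) auto
  also have "\<dots> \<le> 0"
  proof -
    have "l \<ge> 0" unfolding l_def using t by simp
    moreover have "real (card b1) + (\<tau>+1)/(\<tau>-1) * real (card b2) - ((\<tau>+1)/(\<tau>-1) * real (card a2) + real (card a1)) \<le> 0"
      using assms(3) unfolding WMR2_selects_P_def a1_def a2_def b1_def b2_def by linarith
    ultimately show ?thesis using D0 by (simp add: mult_nonneg_nonpos)
  qed
  finally have "(\<Sum>i\<in>{1..n}. g i) \<le> 0" .
  moreover have "(\<Sum>i\<in>{1..n}. dist (vloc i) P - c * dist (vloc i) Q) \<le> (\<Sum>i\<in>{1..n}. g i)"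
    using pw by (rule sum_mono)
  ultimately have "(\<Sum>i\<in>{1..n}. dist (vloc i) P - c * dist (vloc i) Q) \<le> 0" by linarith
  thus ?thesis unfolding SC_def c_def[symmetric] by (simp add: sum_subtractf sum_distrib_left)
qed

end
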